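(* Let $M\ge2$, $1\le n\le M-1$, and let $k,k'\in\mathfrak{L}_M$ satisfy $k_{n-1}=k_n=k_{n+1}=1$ and $k'=k+e^n$, where $e^n$ is the $n$th standard basis vector of $\mathbb{Z}^{M+1}$. Then, as polynomials, $a(x,k')=-2x_{n-1}x_n\,a(x,k)$; in particular $a(x,k')/a(x,k)=-2x_{n-1}x_n$.
   Context: For $M\geq1$, $\mathfrak{L}_M\subset\mathbb{Z}^{M+1}_{\geq0}$ denotes the set of $k=(k_0,\ldots,k_M)$ with $k_0=1$ such that for all $1\leq n\leq M$, $k_n>0$ implies $k_{n-1}>0$. Vectors are indexed from $0$; $\mathbb{1}=(1,\ldots,1)$; inequalities and $\min$ between vectors are entrywise. Multi-index notation: $x^k=\prod_n x_n^{k_n}$, $\binom{k}{b}=\prod_n\binom{k_n}{b_n}$. For $k\in\mathfrak{L}_M$, $\tilde k=(k_1,\ldots,k_M,0)$, $u=\min\{\mathbb{1},\tilde k\}$, $V(k)=\{b\in\mathbb{Z}^{M+1}: u\le b\le \min\{k,\tilde k\}\}$, and $$a(x,k)=\sum_{b\in V(k)}\binom{k}{b}\binom{\tilde k-u}{b-u}(-x)^{\tilde k-b}x^{k-b}\prod_{n=0}^M(1-x_n^2)^{b_n}.$$ *)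

theory Defs
  imports Main
begin

text \<open>Vectors in Z^{M+1}_{>=0} indexed 0..M are represented as functions nat => nat
  that vanish beyond index M.\<close>

definition LM :: "nat \<Rightarrow> (nat \<Rightarrow> nat) \<Rightarrow> bool" where
  "LM M k \<longleftrightarrow> k 0 = 1 \<and> (\<forall>n\<in>{1..M}. k n > 0 \<longrightarrow> k (n - 1) > 0) \<and> (\<forall>i>M. k i = 0)"

definition ktil :: "nat \<Rightarrow> (nat \<Rightarrow> nat) \<Rightarrow> nat \<Rightarrow> nat" where
  "ktil M k n = (if n < M then k (Suc n) else 0)"

definition uvec :: "nat \<Rightarrow> (nat \<Rightarrow> nat) \<Rightarrow> nat \<Rightarrow> nat" where
  "uvec M k n = min 1 (ktil M k n)"

definition Vset :: "nat \<Rightarrow> (nat \<Rightarrow> nat) \<Rightarrow> (nat \<Rightarrow> nat) set" where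
  "Vset M k = {b. (\<forall>n\<le>M. uvec M k n \<le> b n \<and> b n \<le> min (k n) (ktil M k n)) \<and> (\<forall>n>M. b n = 0)}"

definition avec :: "nat \<Rightarrow> (nat \<Rightarrow> 'a::comm_ring_1) \<Rightarrow> (nat \<Rightarrow> nat) \<Rightarrow> 'a" where
  "avec M x k = (\<Sum>b\<in>Vset M k.
      of_nat (\<Prod>n\<le>M. (k n choose b n)) *
      of_nat (\<Prod>n\<le>M. ((ktil M k n - uvec M k n) choose (b n - uvec M k n))) *
      (\<Prod>n\<le>M. (- x n) ^ (ktil M k n - b n)) *
      (\<Prod>n\<le>M. x n ^ (k n - b n)) *
      (\<Prod>n\<le>M. (1 - (x n)\<^sup>2) ^ b n))"

end

theory Submission
  imports Defs
begin

lemma prod_change_one: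
  assumes "finite A" "j \<in> A" "\<And>i. i\<in>A \<Longrightarrow> i\<noteq>j \<Longrightarrow> f i = g i" "f j = c * g j"
  shows "prod f A = (c::'a::comm_monoid_mult) * prod g A"
proof -
  have "prod f A = f j * prod f (A - {j})" using assms by (simp add: prod.remove)
  also have "prod f (A - {j}) = prod g (A - {j})" using assms(3) by (intro prod.cong) auto
  also have "f j * prod g (A - {j}) = c * (g j * prod g (A - {j}))" using assms(4) by (simp add: mult.assoc)
  also have "g j * prod g (A - {j}) = prod g A" using assms by (simp add: prod.remove)
  finally show ?thesis .
qed

theorem proposition2p4:
  fixes M n :: nat and k k' :: "nat \<Rightarrow> nat" and x :: "nat \<Rightarrow> 'a::field"
  assumes "M \<ge> 2" and "1 \<le> n" and "n \<le> M - 1"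
    and "LM M k" and "LM M k'"
    and "k (n - 1) = 1" and "k n = 1" and "k (n + 1) = 1"
    and "k' = k(n := k n + 1)"
  shows "avec M x k' = - 2 * x (n - 1) * x n * avec M x k
    \<and> (avec M x k \<noteq> 0 \<longrightarrow> avec M x k' / avec M x k = - 2 * x (n - 1) * x n)"
proof -
  have nM: "n < M" using assms(1,3) by arith
  have kn': "k' n = 2" using assms(7,9) by simp
  have kother: "\<And>i. i \<noteq> n \<Longrightarrow> k' i = k i" using assms(9) by simp
  have kt1: "ktil M k' (n-1) = 2" "ktil M k (n-1) = 1"
    using nM assms(2,7) kn' by (auto simp: ktil_def)
  have ktother: "\<And>i. i \<noteq> n-1 \<Longrightarrow> ktil M k' i = ktil M k i"
    using assms(2) kother by (auto simp: ktil_def)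
  have ktn: "ktil M k n = 1" using nM assms(8) by (simp add: ktil_def)
  have u: "uvec M k' = uvec M k"
  proof
    fix i show "uvec M k' i = uvec M k i"
      using kt1 ktother by (cases "i = n-1") (auto simp: uvec_def)
  qed
  have u1: "uvec M k (n-1) = 1" "uvec M k n = 1" using kt1 ktn by (auto simp: uvec_def)
  have V: "Vset M k' = Vset M k"
  proof -
    have "\<And>i. min (k' i) (ktil M k' i) = min (k i) (ktil M k i)"
    proof -
      fix i show "min (k' i) (ktil M k' i) = min (k i) (ktil M k i)"
        using kt1 ktother kother kn' ktn assms(2,6,7) by (cases "i = n-1"; cases "i = n") auto
    qed
    then show ?thesis unfolding Vset_def u by simp
  qed
  have bv: "b (n-1) = 1 \<and> b n = 1" if "b \<in> Vset M k" for b
  proof -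
    have "uvec M k (n-1) \<le> b (n-1) \<and> b (n-1) \<le> min (k (n-1)) (ktil M k (n-1))"
         "uvec M k n \<le> b n \<and> b n \<le> min (k n) (ktil M k n)"
      using that nM unfolding Vset_def by auto
    then show ?thesis using u1 assms(6,7) kt1 ktn by auto
  qed
  have tm: "of_nat (\<Prod>i\<le>M. (k' i choose b i)) *
      of_nat (\<Prod>i\<le>M. ((ktil M k' i - uvec M k' i) choose (b i - uvec M k' i))) *
      (\<Prod>i\<le>M. (- x i) ^ (ktil M k' i - b i)) *
      (\<Prod>i\<le>M. x i ^ (k' i - b i)) *
      (\<Prod>i\<le>M. (1 - (x i)\<^sup>2) ^ b i)
    = - 2 * x (n - 1) * x n * (of_nat (\<Prod>i\<le>M. (k i choose b i)) *
      of_nat (\<Prod>i\<le>M. ((ktil M k i - uvec M k i) choose (b i - uvec M k i))) *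
      (\<Prod>i\<le>M. (- x i) ^ (ktil M k i - b i)) *
      (\<Prod>i\<le>M. x i ^ (k i - b i)) *
      (\<Prod>i\<le>M. (1 - (x i)\<^sup>2) ^ b i))" if b: "b \<in> Vset M k" for b
  proof -
    have b1: "b (n-1) = 1" "b n = 1" using bv[OF b] by auto
    have p1: "(\<Prod>i\<le>M. (k' i choose b i)) = 2 * (\<Prod>i\<le>M. (k i choose b i))"
      by (rule prod_change_one[where j=n]) (use nM kother kn' b1 assms(7) in auto)
    have p2: "(\<Prod>i\<le>M. ((ktil M k' i - uvec M k i) choose (b i - uvec M k i)))
        = (\<Prod>i\<le>M. ((ktil M k i - uvec M k i) choose (b i - uvec M k i)))"
    proof (rule prod.cong[OF refl])
      fix i show "(ktil M k' i - uvec M k i) choose (b i - uvec M k i) =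
          (ktil M k i - uvec M k i) choose (b i - uvec M k i)"
        using kt1 ktother u u1 b1 by (cases "i = n-1") auto
    qed
    have p3: "(\<Prod>i\<le>M. (- x i) ^ (ktil M k' i - b i)) = (- x (n-1)) * (\<Prod>i\<le>M. (- x i) ^ (ktil M k i - b i))"
      by (rule prod_change_one[where j="n-1"]) (use nM ktother kt1 b1 in auto)
    have p4: "(\<Prod>i\<le>M. x i ^ (k' i - b i)) = x n * (\<Prod>i\<le>M. x i ^ (k i - b i))"
      by (rule prod_change_one[where j=n]) (use nM kother kn' b1 assms(7) in auto)
    show ?thesis unfolding u p1 p2 p3 p4 by (simp add: algebra_simps)
  qed
  have main: "avec M x k' = - 2 * x (n - 1) * x n * avec M x k"
    unfolding avec_def V sum_distrib_left by (rule sum.cong[OF refl]) (rule tm)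
  show ?thesis using main by simp
qed

end
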